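(* Let $N\ge1$, $p\ge2$, $w,g\in L^1_{loc}(\mathbb{R}^N)$ positive a.e. with $g^{-1}\in L^\infty(\mathbb{R}^N)$. Let $M$ be a constant with $M>0$ if $p=2$ and $0<M<\frac{4}{(p-1)^2}$ if $p>2$. Let $u\in C^1(\mathbb{R}^N)$, $u>0$, with $\|u\|_{L^\infty(\mathbb{R}^N)}\le M$, be a stable weak solution of $\operatorname{div}(w|\nabla u|^{p-2}\nabla u)=g(x)e^{1/u}$ in $\mathbb{R}^N$. Then for every $\beta\in(0,t_p)$ there exists a constant $c>0$, depending on $\beta,p,M,m$ but not on $\psi$, such that for every $\psi\in C^1_c(\mathbb{R}^N)$ with $0\le\psi\le1$, $$\int_{\mathbb{R}^N} g\Big(\frac{\psi}{u}\Big)^{2\beta+p}dx\le c\int_{\mathbb{R}^N} w^{\theta'}|\nabla\psi|^{p\theta'}dx,\qquad \theta'=\frac{2\beta+p}{p}.$$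
   Context: Here $m=\|g^{-1}\|_{L^\infty}$. Weak solution and stability are with respect to $f(t)=-e^{1/t}$ and the equation $-\operatorname{div}(w|\nabla u|^{p-2}\nabla u)=gf(u)$: $u\in C^1$ is a weak solution if $\int w|\nabla u|^{p-2}\nabla u\cdot\nabla\varphi=\int gf(u)\varphi$ for all $\varphi\in C^1_c(\mathbb{R}^N)$; it is stable if for all $\varphi\in C^1_c(\mathbb{R}^N)$, $\int w|\nabla u|^{p-2}|\nabla\varphi|^2+(p-2)\int w|\nabla u|^{p-4}(\nabla u\cdot\nabla\varphi)^2-\int gf'(u)\varphi^2\ge0$ (middle integrand $=0$ where $\nabla u=0$). $t_p=\frac1M+\sqrt{\frac1M+\frac1{M^2}}$ if $p=2$, and $t_p=\frac{2}{M(p-1)}-\frac{p-1}{2}$ if $p>2$. *)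

theory Defs
  imports "HOL-Analysis.Analysis" "HOL-Probability.Essential_Supremum"
begin

definition fnl :: "real \<Rightarrow> real" where
  "fnl t = - exp (1 / t)"

text \<open>Power t^a for t \<ge> 0, a \<ge> 0, with the convention 0^0 = 1
  (Isabelle's powr has 0 powr 0 = 0).\<close>
definition rpow :: "real \<Rightarrow> real \<Rightarrow> real" where
  "rpow t a = (if t = 0 then (if a = 0 then 1 else 0) else t powr a)"

definition C1_grad :: "('a::euclidean_space \<Rightarrow> real) \<Rightarrow> ('a \<Rightarrow> 'a) \<Rightarrow> bool" where
  "C1_grad f Df \<longleftrightarrow> (\<forall>x. (f has_derivative (\<lambda>h. Df x \<bullet> h)) (at x)) \<and> continuous_on UNIV Df"

definition C1c_grad :: "('a::euclidean_space \<Rightarrow> real) \<Rightarrow> ('a \<Rightarrow> 'a) \<Rightarrow> bool" where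
  "C1c_grad f Df \<longleftrightarrow> C1_grad f Df \<and> compact (closure {x. f x \<noteq> 0})"

definition loc_integrable :: "('a::euclidean_space \<Rightarrow> real) \<Rightarrow> bool" where
  "loc_integrable f \<longleftrightarrow> (\<forall>K. compact K \<longrightarrow> set_integrable lebesgue K f)"

text \<open>Weak solution of -div(w |\<nabla>u|^{p-2} \<nabla>u) = g f(u), with Du the gradient of u.\<close>
definition weak_solution ::
  "real \<Rightarrow> ('a::euclidean_space \<Rightarrow> real) \<Rightarrow> ('a \<Rightarrow> real) \<Rightarrow> ('a \<Rightarrow> real) \<Rightarrow> ('a \<Rightarrow> 'a) \<Rightarrow> bool" where
  "weak_solution p w g u Du \<longleftrightarrow>
     (\<forall>\<phi> D\<phi>. C1c_grad \<phi> D\<phi> \<longrightarrow>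
        (\<integral>x. w x * rpow (norm (Du x)) (p - 2) * (Du x \<bullet> D\<phi> x) \<partial>lebesgue)
        = (\<integral>x. g x * fnl (u x) * \<phi> x \<partial>lebesgue))"

definition stable ::
  "real \<Rightarrow> ('a::euclidean_space \<Rightarrow> real) \<Rightarrow> ('a \<Rightarrow> real) \<Rightarrow> ('a \<Rightarrow> real) \<Rightarrow> ('a \<Rightarrow> 'a) \<Rightarrow> bool" where
  "stable p w g u Du \<longleftrightarrow>
     (\<forall>\<phi> D\<phi>. C1c_grad \<phi> D\<phi> \<longrightarrow>
        (\<integral>x. w x * rpow (norm (Du x)) (p - 2) * (norm (D\<phi> x))\<^sup>2 \<partial>lebesgue)
        + (p - 2) * (\<integral>x. (if Du x = 0 then 0
                         else w x * norm (Du x) powr (p - 4) * (Du x \<bullet> D\<phi> x)\<^sup>2) \<partial>lebesgue)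
        - (\<integral>x. g x * deriv fnl (u x) * (\<phi> x)\<^sup>2 \<partial>lebesgue) \<ge> 0)"

definition t_p :: "real \<Rightarrow> real \<Rightarrow> real" where
  "t_p p M = (if p = 2 then 1 / M + sqrt (1 / M + 1 / M\<^sup>2)
              else 2 / (M * (p - 1)) - (p - 1) / 2)"

end

theory Submission
  imports Defs
begin

lemma cont_meas_leb:
  fixes h :: "'a::euclidean_space \<Rightarrow> 'b::topological_space"
  shows "continuous_on UNIV h \<Longrightarrow> h \<in> borel_measurable lebesgue"
  by (simp add: borel_measurable_continuous_onI measurable_completion)

lemma int_loc:
  fixes w h :: "'a::euclidean_space \<Rightarrow> real"
  assumes "loc_integrable w" "compact S" "continuous_on UNIV h" "\<And>x. x \<notin> S \<Longrightarrow> h x = 0"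
  shows "integrable lebesgue (\<lambda>x. w x * h x)"
proof -
  have i: "integrable lebesgue (\<lambda>x. indicator S x *\<^sub>R w x)"
    using assms(1,2) unfolding loc_integrable_def set_integrable_def by auto
  have "bounded (h ` S)"
    using compact_imp_bounded[OF compact_continuous_image[OF continuous_on_subset[OF assms(3)] assms(2)]] by simp
  then obtain B where B: "\<And>x. x \<in> S \<Longrightarrow> norm (h x) \<le> B"
    unfolding bounded_iff by auto
  define B' where "B' = max B 0"
  have B': "\<And>x. \<bar>h x\<bar> \<le> B'"
    using B assms(4) unfolding B'_def by (metis max.coboundedI1 max.coboundedI2 abs_zero order_refl real_norm_def)
  have eq: "(\<lambda>x. w x * h x) = (\<lambda>x. (indicator S x *\<^sub>R w x) * h x)"
  proof (rule ext)
    fix x show "w x * h x = (indicator S x *\<^sub>R w x) * h x"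
      using assms(4)[of x] by (cases "x \<in> S") auto
  qed
  have m: "(\<lambda>x. (indicator S x *\<^sub>R w x) * h x) \<in> borel_measurable lebesgue"
    using borel_measurable_integrable[OF i] cont_meas_leb[OF assms(3)] by measurable
  have "integrable lebesgue (\<lambda>x. B' * (indicator S x *\<^sub>R w x))"
    using i by simp
  then have "integrable lebesgue (\<lambda>x. (indicator S x *\<^sub>R w x) * h x)"
  proof (rule Bochner_Integration.integrable_bound[OF _ m])
    show "AE x in lebesgue. norm ((indicator S x *\<^sub>R w x) * h x) \<le> norm (B' * (indicator S x *\<^sub>R w x))"
    proof (rule AE_I2)
      fix x
      have "B' \<ge> 0" unfolding B'_def by simp
      then show "norm ((indicator S x *\<^sub>R w x) * h x) \<le> norm (B' * (indicator S x *\<^sub>R w x))"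
        using B'[of x] by (simp add: abs_mult mult.commute mult_right_mono)
    qed
  qed
  then show ?thesis using eq by simp
qed

lemma w_meas:
  fixes w :: "'a::euclidean_space \<Rightarrow> real"
  assumes "loc_integrable w"
  shows "w \<in> borel_measurable lebesgue"
proof (rule borel_measurable_LIMSEQ_real)
  fix n :: nat
  have "integrable lebesgue (\<lambda>x. indicator (cball 0 (real n)) x *\<^sub>R w x)"
    using assms unfolding loc_integrable_def set_integrable_def by auto
  then show "(\<lambda>x. indicator (cball 0 (real n)) x *\<^sub>R w x) \<in> borel_measurable lebesgue"
    by (rule borel_measurable_integrable)
next
  fix x :: 'a
  have "eventually (\<lambda>n. indicator (cball 0 (real n)) x *\<^sub>R w x = w x) sequentially"
    unfolding eventually_sequentially
    by (rule exI[of _ "nat \<lceil>norm x\<rceil>"]) (auto simp: indicator_def dist_norm intro: order_trans[OF real_nat_ceiling_ge])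
  then show "(\<lambda>n. indicator (cball 0 (real n)) x *\<^sub>R w x) \<longlonglongrightarrow> w x"
    by (rule tendsto_eventually)
qed

lemma C1_cont: "C1_grad f Df \<Longrightarrow> continuous_on UNIV f"
  unfolding C1_grad_def
  by (meson continuous_at_imp_continuous_on has_derivative_continuous)

lemma C1_mult:
  assumes "C1_grad f Df" "C1_grad g Dg"
  shows "C1_grad (\<lambda>x. f x * g x) (\<lambda>x. f x *\<^sub>R Dg x + g x *\<^sub>R Df x)"
  unfolding C1_grad_def
proof (intro conjI allI)
  fix x
  have "((\<lambda>x. f x * g x) has_derivative (\<lambda>h. f x * (Dg x \<bullet> h) + (Df x \<bullet> h) * g x)) (at x)"
    using assms unfolding C1_grad_def by (auto intro: has_derivative_mult)
  then show "((\<lambda>x. f x * g x) has_derivative (\<lambda>h. (f x *\<^sub>R Dg x + g x *\<^sub>R Df x) \<bullet> h)) (at x)"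
    by (simp add: inner_add_left algebra_simps)
next
  show "continuous_on UNIV (\<lambda>x. f x *\<^sub>R Dg x + g x *\<^sub>R Df x)"
    using assms C1_cont[OF assms(1)] C1_cont[OF assms(2)] unfolding C1_grad_def
    by (intro continuous_intros) auto
qed

lemma C1_div:
  assumes "C1_grad f Df" "C1_grad g Dg" "\<And>x. g x > 0"
  shows "C1_grad (\<lambda>x. f x / g x) (\<lambda>x. (1 / g x) *\<^sub>R Df x - (f x / (g x)\<^sup>2) *\<^sub>R Dg x)"
  unfolding C1_grad_def
proof (intro conjI allI)
  fix x
  have gx: "g x \<noteq> 0" using assms(3)[of x] by simp
  have "((\<lambda>x. f x / g x) has_derivative (\<lambda>h. - f x * (inverse (g x) * (Dg x \<bullet> h) * inverse (g x)) + (Df x \<bullet> h) / g x)) (at x)"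
    using has_derivative_divide[of f "\<lambda>h. Df x \<bullet> h" x UNIV g "\<lambda>h. Dg x \<bullet> h"] assms gx
    unfolding C1_grad_def by blast
  moreover have "(\<lambda>h. - f x * (inverse (g x) * (Dg x \<bullet> h) * inverse (g x)) + (Df x \<bullet> h) / g x)
     = (\<lambda>h. ((1 / g x) *\<^sub>R Df x - (f x / (g x)\<^sup>2) *\<^sub>R Dg x) \<bullet> h)"
    using gx by (auto simp: inner_diff_left field_simps power2_eq_square)
  ultimately show "((\<lambda>x. f x / g x) has_derivative (\<lambda>h. ((1 / g x) *\<^sub>R Df x - (f x / (g x)\<^sup>2) *\<^sub>R Dg x) \<bullet> h)) (at x)"
    by simp
next
  have "\<forall>x. g x \<noteq> 0" using assms(3) by (metis less_irrefl)
  then show "continuous_on UNIV (\<lambda>x. (1 / g x) *\<^sub>R Df x - (f x / (g x)\<^sup>2) *\<^sub>R Dg x)"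
    using assms C1_cont[OF assms(1)] C1_cont[OF assms(2)] unfolding C1_grad_def
    by (intro continuous_intros) auto
qed


lemma C1_powr:
  assumes C: "C1_grad f Df" and nn: "\<And>x. f x \<ge> 0" and r: "r > 1"
  shows "C1_grad (\<lambda>x. f x powr r) (\<lambda>x. (r * f x powr (r - 1)) *\<^sub>R Df x)"
  unfolding C1_grad_def
proof (intro conjI allI)
  fix x
  have dfx: "(f has_derivative (\<lambda>h. Df x \<bullet> h)) (at x)" using C unfolding C1_grad_def by auto
  show "((\<lambda>x. f x powr r) has_derivative (\<lambda>h. ((r * f x powr (r - 1)) *\<^sub>R Df x) \<bullet> h)) (at x)"
  proof (cases "f x > 0")
    case True
    have "((\<lambda>z. z powr r) has_derivative (\<lambda>h. r * f x powr (r - 1) * h)) (at (f x))"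
      using has_real_derivative_powr[OF True, of r] unfolding has_field_derivative_def by (simp add: mult.commute[of _ "r * f x powr (r - 1)"])
    from has_derivative_compose[OF dfx this]
    show ?thesis by (simp add: mult.assoc)
  next
    case False
    then have fx0: "f x = 0" using nn[of x] by simp
    have "(\<lambda>h. Df x \<bullet> h) = (\<lambda>h. 0)"
      by (rule has_derivative_local_min[OF dfx]) (simp add: fx0 nn)
    then have D0: "Df x = 0" by (metis inner_eq_zero_iff)
    have lim: "((\<lambda>y. norm (f y - f x - Df x \<bullet> (y - x)) / norm (y - x)) \<longlongrightarrow> 0) (at x)"
      using dfx unfolding has_derivative_iff_norm by auto
    then have lim2: "((\<lambda>y. f y / norm (y - x)) \<longlongrightarrow> 0) (at x)"
      using fx0 D0 nn by simp
    have "isCont f x" using dfx by (rule has_derivative_continuous)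
    then have "eventually (\<lambda>y. dist (f y) (f x) < 1) (at x)"
      unfolding isCont_def tendsto_iff by auto
    then have ev: "eventually (\<lambda>y. f y \<le> 1) (at x)"
      by eventually_elim (simp add: fx0 dist_real_def nn)
    have "((\<lambda>y. norm (f y powr r - f x powr r - 0) / norm (y - x)) \<longlongrightarrow> 0) (at x)"
    proof (rule tendsto_sandwich[OF _ _ tendsto_const lim2])
      show "eventually (\<lambda>y. 0 \<le> norm (f y powr r - f x powr r - 0) / norm (y - x)) (at x)"
        by simp
      show "eventually (\<lambda>y. norm (f y powr r - f x powr r - 0) / norm (y - x) \<le> f y / norm (y - x)) (at x)"
        using ev
      proof eventually_elim
        case (elim y)
        have "f y powr r \<le> f y powr 1" using powr_mono'[of 1 r "f y"] r nn[of y] elim by simp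
        also have "\<dots> = f y" using nn[of y] by simp
        finally show ?case using fx0 nn[of y] by (simp add: divide_right_mono)
      qed
    qed
    then have "((\<lambda>x. f x powr r) has_derivative (\<lambda>h. 0)) (at x)"
      unfolding has_derivative_iff_norm by simp
    then show ?thesis using D0 by simp
  qed
next
  have "continuous_on UNIV (\<lambda>x. f x powr (r - 1))"
    using C1_cont[OF C] nn r by (intro continuous_on_powr') (auto intro: continuous_intros)
  then show "continuous_on UNIV (\<lambda>x. (r * f x powr (r - 1)) *\<^sub>R Df x)"
    using C unfolding C1_grad_def by (intro continuous_on_scaleR continuous_on_mult continuous_on_const) auto
qed

lemma support_sub:
  assumes "compact (closure {x. (f::'a::euclidean_space\<Rightarrow>real) x \<noteq> 0})" "\<And>x. f x = 0 \<Longrightarrow> g x = 0"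
  shows "compact (closure {x. (g::'a\<Rightarrow>real) x \<noteq> 0})"
proof -
  have "bounded {x. f x \<noteq> 0}" using assms(1) compact_closure by blast
  then have "bounded {x. g x \<noteq> 0}" by (rule bounded_subset) (use assms(2) in auto)
  then show ?thesis using compact_closure by blast
qed


lemma young_eps:
  fixes q e :: real
  assumes q: "q > 1" and e: "e > 0"
  obtains C where "C > 0" "\<And>x y. x \<ge> 0 \<Longrightarrow> y \<ge> 0 \<Longrightarrow> x * y \<le> e * x powr q + C * y powr (q / (q - 1))"
proof -
  define q' where "q' = q / (q - 1)"
  have q'1: "q' > 1" using q unfolding q'_def by (simp add: field_simps)
  have conj: "1 / q + 1 / q' = 1" using q unfolding q'_def by (simp add: field_simps)
  define l where "l = (e * q) powr (1 / q)"
  have lpos: "l > 0" using e q unfolding l_def by simp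
  have lq: "l powr q = e * q" using e q unfolding l_def by (simp add: powr_powr)
  define C where "C = l powr (- q') / q'"
  have Cpos: "C > 0" using lpos q'1 unfolding C_def by simp
  show ?thesis
  proof (rule that[OF Cpos])
    fix x y :: real assume x: "x \<ge> 0" and y: "y \<ge> 0"
    have "x * y = (l * x) * (y / l)" using lpos by simp
    also have "\<dots> \<le> (l * x) powr q / q + (y / l) powr q' / q'"
      by (rule Youngs_inequality[OF q q'1 conj]) (use lpos x y in auto)
    also have "(l * x) powr q / q = e * x powr q"
      using lpos x q by (simp add: powr_mult lq)
    also have "(y / l) powr q' / q' = C * y powr q'"
      using lpos y unfolding C_def by (simp add: powr_divide powr_minus_divide)
    finally show "x * y \<le> e * x powr q + C * y powr (q / (q - 1))" unfolding q'_def by simp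
  qed
qed

lemma rpow_gt2: "p > 2 \<Longrightarrow> rpow a (p - 2) = a powr (p - 2)"
  unfolding rpow_def by simp

lemma rpow_a2:
  assumes "a \<ge> 0" "p \<ge> 2"
  shows "rpow a (p - 2) * a\<^sup>2 = a powr p"
proof (cases "p = 2")
  case True then show ?thesis using assms by (simp add: rpow_def powr_numeral)
next
  case False
  then have "p > 2" using assms by simp
  then show ?thesis using assms
  proof (cases "a = 0")
    case True then show ?thesis using \<open>p > 2\<close> by (simp add: rpow_gt2)
  next
    case False
    then have "a powr (p - 2) * a powr 2 = a powr p" by (simp flip: powr_add)
    then show ?thesis using assms \<open>p > 2\<close> by (simp add: rpow_gt2 powr_numeral)
  qed
qed

lemma rpow_a1:
  assumes "a \<ge> 0" "p \<ge> 2"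
  shows "rpow a (p - 2) * a = a powr (p - 1)"
proof (cases "p = 2")
  case True then show ?thesis using assms by (simp add: rpow_def)
next
  case False
  then have "p > 2" using assms by simp
  then show ?thesis using assms
  proof (cases "a = 0")
    case True then show ?thesis using \<open>p > 2\<close> by (simp add: rpow_gt2)
  next
    case False
    have e1: "a powr (p - 1) = a powr (p - 2) * a powr 1" using powr_add[of a "p-2" 1] by simp
    have "a powr 1 = a" using assms(1) by simp
    then have "a powr (p - 2) * a = a powr (p - 1)" using e1 by simp
    then show ?thesis using assms \<open>p > 2\<close> by (simp add: rpow_gt2 abs_of_nonneg)
  qed
qed

lemma rpow_nn: "a \<ge> 0 \<Longrightarrow> rpow a b \<ge> 0"
  unfolding rpow_def by simp


lemma Y1:
  fixes p e b :: real
  assumes p: "p \<ge> 2" and e: "e > 0"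
  obtains C where "C > 0" "\<And>a z d s. a \<ge> 0 \<Longrightarrow> z \<ge> 0 \<Longrightarrow> d \<ge> 0 \<Longrightarrow> \<bar>s\<bar> \<le> a * d \<Longrightarrow>
     \<bar>rpow a (p - 2) * z powr (2 * b + p - 1) * s\<bar>
       \<le> e * (rpow a (p - 2) * a\<^sup>2 * z powr (2 * b + p)) + C * (z powr (2 * b) * d powr p)"
proof -
  define q where "q = p / (p - 1)"
  have q1: "q > 1" using p unfolding q_def by (simp add: field_simps)
  have qq: "q / (q - 1) = p" using p unfolding q_def by (simp add: field_simps)
  have pq: "(p - 1) * q = p" using p unfolding q_def by (simp add: field_simps)
  obtain C where C: "C > 0" "\<And>x y. x \<ge> 0 \<Longrightarrow> y \<ge> 0 \<Longrightarrow> x * y \<le> e * x powr q + C * y powr (q / (q - 1))"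
    using young_eps[OF q1 e] by blast
  show ?thesis
  proof (rule that[OF C(1)])
    fix a z d s :: real
    assume a: "a \<ge> 0" and z: "z \<ge> 0" and d: "d \<ge> 0" and s: "\<bar>s\<bar> \<le> a * d"
    define X where "X = a * z"
    have X: "X \<ge> 0" using a z unfolding X_def by simp
    have r0: "rpow a (p - 2) \<ge> 0" using a by (rule rpow_nn)
    have "\<bar>rpow a (p - 2) * z powr (2 * b + p - 1) * s\<bar> = rpow a (p - 2) * z powr (2 * b + p - 1) * \<bar>s\<bar>"
      using r0 by (simp add: abs_mult)
    also have "\<dots> \<le> rpow a (p - 2) * z powr (2 * b + p - 1) * (a * d)"
      using r0 s by (intro mult_left_mono) auto
    also have "\<dots> = (rpow a (p - 2) * a) * (z powr (p - 1) * z powr (2 * b)) * d"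
      by (simp add: powr_add[symmetric] algebra_simps)
    also have "\<dots> = (X powr (p - 1) * d) * z powr (2 * b)"
      using rpow_a1[OF a p] a z unfolding X_def by (simp add: powr_mult)
    also have "\<dots> \<le> (e * (X powr (p - 1)) powr q + C * d powr (q / (q - 1))) * z powr (2 * b)"
      using C(2)[of "X powr (p - 1)" d] d by (intro mult_right_mono) auto
    also have "\<dots> = e * (X powr p * z powr (2 * b)) + C * (z powr (2 * b) * d powr p)"
      using qq pq by (simp add: powr_powr algebra_simps)
    also have "X powr p * z powr (2 * b) = rpow a (p - 2) * a\<^sup>2 * z powr (2 * b + p)"
      using rpow_a2[OF a p] a z unfolding X_def by (simp add: powr_mult powr_add algebra_simps)
    finally show "\<bar>rpow a (p - 2) * z powr (2 * b + p - 1) * s\<bar>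
       \<le> e * (rpow a (p - 2) * a\<^sup>2 * z powr (2 * b + p)) + C * (z powr (2 * b) * d powr p)" .
  qed
qed

lemma Y2:
  fixes p e b :: real
  assumes p: "p \<ge> 2" and e: "e > 0"
  obtains C where "C > 0" "\<And>a z d. a \<ge> 0 \<Longrightarrow> z \<ge> 0 \<Longrightarrow> d \<ge> 0 \<Longrightarrow>
     rpow a (p - 2) * z powr (2 * b + p - 2) * d\<^sup>2
       \<le> e * (rpow a (p - 2) * a\<^sup>2 * z powr (2 * b + p)) + C * (z powr (2 * b) * d powr p)"
proof (cases "p = 2")
  case True
  show ?thesis
  proof (rule that[of 1])
    fix a z d :: real assume a: "a \<ge> 0" and z: "z \<ge> 0" and d: "d \<ge> 0"
    have r1: "rpow a (p - 2) = 1" using True by (simp add: rpow_def)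
    have "0 \<le> e * (rpow a (p - 2) * a\<^sup>2 * z powr (2 * b + p))"
      using e rpow_nn[OF a] by simp
    then have "0 \<le> e * (1 * a\<^sup>2 * z powr (2 * b + p))" by (simp only: r1)
    then have "0 \<le> e * (a\<^sup>2 * z powr (2 * b + 2))" using True by simp
    then have "z powr (2 * b) * d\<^sup>2 \<le> e * (1 * a\<^sup>2 * z powr (2 * b + 2)) + 1 * (z powr (2 * b) * d powr 2)"
      using d by (simp add: powr_numeral)
    then show "rpow a (p - 2) * z powr (2 * b + p - 2) * d\<^sup>2
       \<le> e * (rpow a (p - 2) * a\<^sup>2 * z powr (2 * b + p)) + 1 * (z powr (2 * b) * d powr p)"
      using True d by (simp add: rpow_def mult.commute powr_numeral)
  qed simp
next
  case False
  then have p2: "p > 2" using p by simp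
  define q where "q = p / (p - 2)"
  have q1: "q > 1" using p2 unfolding q_def by (simp add: field_simps)
  have qq: "q / (q - 1) = p / 2" using p2 unfolding q_def by (simp add: field_simps)
  have pq: "(p - 2) * q = p" using p2 unfolding q_def by (simp add: field_simps)
  obtain C where C: "C > 0" "\<And>x y. x \<ge> 0 \<Longrightarrow> y \<ge> 0 \<Longrightarrow> x * y \<le> e * x powr q + C * y powr (q / (q - 1))"
    using young_eps[OF q1 e] by blast
  show ?thesis
  proof (rule that[OF C(1)])
    fix a z d :: real
    assume a: "a \<ge> 0" and z: "z \<ge> 0" and d: "d \<ge> 0"
    define X where "X = a * z"
    have X: "X \<ge> 0" using a z unfolding X_def by simp
    have "rpow a (p - 2) * z powr (2 * b + p - 2) * d\<^sup>2 = (a powr (p - 2) * z powr (p - 2)) * d\<^sup>2 * z powr (2 * b)"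
      using p2 by (simp add: rpow_gt2 powr_add[symmetric] algebra_simps)
    also have "\<dots> = (X powr (p - 2) * d\<^sup>2) * z powr (2 * b)"
      using a z unfolding X_def by (simp add: powr_mult)
    also have "\<dots> \<le> (e * (X powr (p - 2)) powr q + C * (d\<^sup>2) powr (q / (q - 1))) * z powr (2 * b)"
      using C(2)[of "X powr (p - 2)" "d\<^sup>2"] by (intro mult_right_mono) auto
    also have "(d\<^sup>2) powr (q / (q - 1)) = d powr p"
    proof -
      have "d\<^sup>2 = d powr 2" using d by (simp add: powr_numeral)
      then have "(d\<^sup>2) powr (q / (q - 1)) = d powr (2 * (q / (q - 1)))" by (simp only: powr_powr)
      moreover have "2 * (q / (q - 1)) = p" using qq by (simp add: mult.commute)
      ultimately show ?thesis by simp
    qed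
    also have "(X powr (p - 2)) powr q = X powr p"
      using pq by (simp add: powr_powr)
    also have "(e * X powr p + C * d powr p) * z powr (2 * b) = e * (X powr p * z powr (2 * b)) + C * (z powr (2 * b) * d powr p)"
      by (simp add: algebra_simps)
    also have "X powr p * z powr (2 * b) = rpow a (p - 2) * a\<^sup>2 * z powr (2 * b + p)"
      using rpow_a2[OF a p] a z unfolding X_def by (simp add: powr_mult powr_add algebra_simps)
    finally show "rpow a (p - 2) * z powr (2 * b + p - 2) * d\<^sup>2
       \<le> e * (rpow a (p - 2) * a\<^sup>2 * z powr (2 * b + p)) + C * (z powr (2 * b) * d powr p)" .
  qed
qed

lemma arith_core:
  fixes I J K E1 E2 T p k al D M e C1 C2 :: real
  assumes D: "D = 2 * al + 1" and al: "al > 0" and k: "k = al + 1" and p: "p \<ge> 2" and M: "M > 0"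
    and G: "D - (p - 1) * al\<^sup>2 * M > 0"
    and W: "D * I = E1 + 2 * k * J"
    and S: "E2 \<le> (p - 1) * (al\<^sup>2 * I - 2 * k * al * J + k\<^sup>2 * K)"
    and E1: "E1 \<le> M * E2" and nn: "I \<ge> 0" "K \<ge> 0" "E2 \<ge> 0" "T \<ge> 0"
    and YJ: "\<bar>J\<bar> \<le> e * I + C1 * T" and YK: "K \<le> e * I + C2 * T"
    and e: "e > 0" "2 * k * e \<le> D / 2"
    and e2: "((p - 1) * 2 * k * al * (al + 1) + (p - 1) * D * k\<^sup>2) * (4 * e / D) * M
              \<le> (D - (p - 1) * al\<^sup>2 * M) / 2"
  shows "E2 \<le> (2 / (D - (p - 1) * al\<^sup>2 * M)) *
     (((p - 1) * 2 * k * al * (al + 1) + (p - 1) * D * k\<^sup>2) * (4 * e / D) * 2 * k * C1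
      + ((p - 1) * 2 * k * al * (al + 1) + (p - 1) * D * k\<^sup>2) * (C1 + C2)) * T"
proof -
  define G where "G = D - (p - 1) * al\<^sup>2 * M"
  define A where "A = (p - 1) * 2 * k * al * (al + 1) + (p - 1) * D * k\<^sup>2"
  have Dpos: "D > 0" using D al by simp
  have A0: "A \<ge> 0" unfolding A_def using p al k Dpos by simp
  have s0: "D * E2 \<le> D * ((p - 1) * (al\<^sup>2 * I - 2 * k * al * J + k\<^sup>2 * K))"
    using S Dpos by (simp add: mult_left_mono)
  have eq: "D * ((p - 1) * (al\<^sup>2 * I - 2 * k * al * J + k\<^sup>2 * K))
      = (p - 1) * al\<^sup>2 * (D * I) - (p - 1) * 2 * k * al * D * J + (p - 1) * D * k\<^sup>2 * K"
    by (simp add: algebra_simps power2_eq_square)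
  have s1: "D * E2 \<le> (p - 1) * al\<^sup>2 * E1 - (p - 1) * 2 * k * al * (al + 1) * J + (p - 1) * D * k\<^sup>2 * K"
  proof -
    have "D * E2 \<le> (p - 1) * al\<^sup>2 * (E1 + 2 * k * J) - (p - 1) * 2 * k * al * D * J + (p - 1) * D * k\<^sup>2 * K"
      using s0 eq W by simp
    also have "\<dots> = (p - 1) * al\<^sup>2 * E1 - (p - 1) * 2 * k * al * (al + 1) * J + (p - 1) * D * k\<^sup>2 * K"
      unfolding D by (simp add: algebra_simps power2_eq_square)
    finally show ?thesis .
  qed
  have "(p - 1) * al\<^sup>2 * E1 \<le> (p - 1) * al\<^sup>2 * (M * E2)"
    using E1 p by (intro mult_left_mono) auto
  moreover have "- ((p - 1) * 2 * k * al * (al + 1) * J) \<le> (p - 1) * 2 * k * al * (al + 1) * \<bar>J\<bar>"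
  proof -
    have "0 \<le> (p - 1) * 2 * k * al * (al + 1)" using p al k by simp
    then show ?thesis by (metis abs_ge_minus_self mult_left_mono mult_minus_right)
  qed
  ultimately have s1': "D * E2 \<le> (p - 1) * al\<^sup>2 * (M * E2) + (p - 1) * 2 * k * al * (al + 1) * \<bar>J\<bar> + (p - 1) * D * k\<^sup>2 * K"
    using s1 by linarith
  have A1: "0 \<le> (p - 1) * 2 * k * al * (al + 1)" and A2: "0 \<le> (p - 1) * D * k\<^sup>2" using p al k Dpos by auto
  have "(p - 1) * 2 * k * al * (al + 1) * \<bar>J\<bar> + (p - 1) * D * k\<^sup>2 * K \<le> A * (\<bar>J\<bar> + K)"
    unfolding A_def using mult_nonneg_nonneg[OF A1 nn(2)] mult_nonneg_nonneg[OF A2 abs_ge_zero[of J]]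
    by (simp add: algebra_simps)
  moreover have "G * E2 = D * E2 - (p - 1) * al\<^sup>2 * (M * E2)" unfolding G_def by (simp add: algebra_simps)
  ultimately have s2: "G * E2 \<le> A * (\<bar>J\<bar> + K)"
    using s1' by linarith
  have s3: "\<bar>J\<bar> + K \<le> 2 * e * I + (C1 + C2) * T" using YJ YK by (simp add: algebra_simps)
  have "D * I \<le> M * E2 + 2 * k * \<bar>J\<bar>"
    using W E1 k al by (smt (verit) abs_ge_self mult_left_mono)
  also have "2 * k * \<bar>J\<bar> \<le> 2 * k * (e * I + C1 * T)" using YJ k al by (intro mult_left_mono) auto
  finally have "D * I \<le> M * E2 + (2 * k * e) * I + 2 * k * C1 * T" by (simp add: algebra_simps)
  moreover have "(2 * k * e) * I \<le> D / 2 * I" using e(2) nn by (intro mult_right_mono) auto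
  ultimately have s4: "I \<le> (2 / D) * (M * E2 + 2 * k * C1 * T)" using Dpos by (simp add: field_simps)
  have "G * E2 \<le> A * (2 * e * I + (C1 + C2) * T)" using s2 s3 A0 by (meson mult_left_mono order_trans)
  also have "\<dots> = (A * 2 * e) * I + A * (C1 + C2) * T" by (simp add: algebra_simps)
  also have "(A * 2 * e) * I \<le> (A * 2 * e) * ((2 / D) * (M * E2 + 2 * k * C1 * T))"
    using s4 A0 e by (intro mult_left_mono) auto
  also have "(A * 2 * e) * ((2 / D) * (M * E2 + 2 * k * C1 * T)) = (A * (4 * e / D) * M) * E2 + A * (4 * e / D) * 2 * k * C1 * T"
    by (simp add: field_simps add_divide_distrib)
  also have "(A * (4 * e / D) * M) * E2 \<le> G / 2 * E2" using e2 nn unfolding A_def G_def by (intro mult_right_mono) auto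
  finally have "G * E2 \<le> G / 2 * E2 + A * (4 * e / D) * 2 * k * C1 * T + A * (C1 + C2) * T" by auto
  then have "G / 2 * E2 \<le> A * (4 * e / D) * 2 * k * C1 * T + A * (C1 + C2) * T" by linarith
  also have "\<dots> = (A * (4 * e / D) * 2 * k * C1 + A * (C1 + C2)) * T" by (simp add: algebra_simps)
  finally have "G / 2 * E2 \<le> (A * (4 * e / D) * 2 * k * C1 + A * (C1 + C2)) * T" .
  then show ?thesis using G unfolding G_def[symmetric] A_def[symmetric] by (simp add: field_simps)
qed

lemma rpow_cont:
  assumes "continuous_on UNIV f" "\<And>x. f x \<ge> 0" "q \<ge> 0"
  shows "continuous_on UNIV (\<lambda>x. rpow (f x) q)"
proof (cases "q = 0")
  case True
  then have "(\<lambda>x. rpow (f x) q) = (\<lambda>x. 1)" by (auto simp: rpow_def fun_eq_iff)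
  then show ?thesis by (metis continuous_on_const)
next
  case False
  then have "(\<lambda>x. rpow (f x) q) = (\<lambda>x. f x powr q)" by (auto simp: rpow_def)
  moreover have "continuous_on UNIV (\<lambda>x. f x powr q)"
    using assms False by (intro continuous_on_powr') (auto intro: continuous_intros)
  ultimately show ?thesis by metis
qed

lemma sq_comb:
  fixes X Y :: "'a::real_inner"
  shows "(norm (c1 *\<^sub>R X + c2 *\<^sub>R Y))\<^sup>2 = c1\<^sup>2 * (norm X)\<^sup>2 + 2 * c1 * c2 * (X \<bullet> Y) + c2\<^sup>2 * (norm Y)\<^sup>2"
  by (simp only: power2_norm_eq_inner) (simp add: inner_add_left inner_add_right inner_commute[of Y X] algebra_simps power2_eq_square)

lemma deriv_fnl:
  assumes "t > 0"
  shows "deriv fnl t = exp (1 / t) / t\<^sup>2"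
proof -
  have "(fnl has_real_derivative exp (1 / t) / t\<^sup>2) (at t)"
    unfolding fnl_def[abs_def] using assms
    by (auto intro!: derivative_eq_intros simp: field_simps power2_eq_square)
  then show ?thesis by (rule DERIV_imp_deriv)
qed


lemma core:
  fixes p M b :: real
  assumes p: "p \<ge> 2" and M: "M > 0" and b: "b > 0"
    and cond: "(p - 1) * (b + (p - 2) / 2)\<^sup>2 * M < 2 * (b + (p - 2) / 2) + 1"
  shows "\<exists>C>0. \<forall>(w :: 'a::euclidean_space \<Rightarrow> real) g u Du \<psi> D\<psi>.
     loc_integrable w \<and> loc_integrable g \<and> (AE x in lebesgue. w x > 0) \<and> (AE x in lebesgue. g x > 0) \<and>
     C1_grad u Du \<and> (\<forall>x. u x > 0) \<and> (\<forall>x. u x \<le> M) \<and> weak_solution p w g u Du \<and> stable p w g u Du \<and>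
     C1c_grad \<psi> D\<psi> \<and> (\<forall>x. 0 \<le> \<psi> x) \<longrightarrow>
     integrable lebesgue (\<lambda>x. g x * (\<psi> x / u x) powr (2 * b + p)) \<and>
     integrable lebesgue (\<lambda>x. w x * ((\<psi> x / u x) powr (2 * b) * norm (D\<psi> x) powr p)) \<and>
     (\<integral>x. g x * (\<psi> x / u x) powr (2 * b + p) \<partial>lebesgue)
       \<le> C * (\<integral>x. w x * ((\<psi> x / u x) powr (2 * b) * norm (D\<psi> x) powr p) \<partial>lebesgue)"
proof -
  define al where "al = b + (p - 2) / 2"
  define k where "k = al + 1"
  define D where "D = 2 * al + 1"
  define A where "A = (p - 1) * 2 * k * al * (al + 1) + (p - 1) * D * k\<^sup>2"
  define G where "G = D - (p - 1) * al\<^sup>2 * M"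
  have "(p - 2) / 2 \<ge> 0" using p by simp
  then have al: "al > 0" using b unfolding al_def by linarith
  have Dpos: "D > 0" using al unfolding D_def by simp
  have k1: "k > 1" using al unfolding k_def by simp
  have Gpos: "G > 0" using cond unfolding G_def D_def al_def by linarith
  have Apos: "A > 0" unfolding A_def using p al k1 Dpos
    by (intro add_pos_pos) (auto intro!: mult_pos_pos)
  define e where "e = min (D / (4 * k)) (G * D / (8 * A * M))"
  have epos: "e > 0" unfolding e_def using Dpos k1 Gpos Apos M by simp
  have e1: "2 * k * e \<le> D / 2"
  proof -
    have "e \<le> D / (4 * k)" unfolding e_def by simp
    then have "2 * k * e \<le> 2 * k * (D / (4 * k))" using k1 by (intro mult_left_mono) auto
    also have "2 * k * (D / (4 * k)) = D / 2" using k1 by (simp add: field_simps)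
    finally show ?thesis .
  qed
  have e2: "A * (4 * e / D) * M \<le> G / 2"
  proof -
    have "e \<le> G * D / (8 * A * M)" unfolding e_def by simp
    then have "A * (4 / D) * M * e \<le> A * (4 / D) * M * (G * D / (8 * A * M))"
      using Apos Dpos M by (intro mult_left_mono) auto
    also have "A * (4 / D) * M * (G * D / (8 * A * M)) = G / 2" using Apos Dpos M by (simp add: field_simps)
    also have "A * (4 / D) * M * e = A * (4 * e / D) * M" by simp
    finally show ?thesis .
  qed
  obtain C1 where C1: "C1 > 0" "\<And>a z d s. a \<ge> 0 \<Longrightarrow> z \<ge> 0 \<Longrightarrow> d \<ge> 0 \<Longrightarrow> \<bar>s\<bar> \<le> a * d \<Longrightarrow>
     \<bar>rpow a (p - 2) * z powr (2 * b + p - 1) * s\<bar>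
       \<le> e * (rpow a (p - 2) * a\<^sup>2 * z powr (2 * b + p)) + C1 * (z powr (2 * b) * d powr p)"
    using Y1[OF p epos] by blast
  obtain C2 where C2: "C2 > 0" "\<And>a z d. a \<ge> 0 \<Longrightarrow> z \<ge> 0 \<Longrightarrow> d \<ge> 0 \<Longrightarrow>
     rpow a (p - 2) * z powr (2 * b + p - 2) * d\<^sup>2
       \<le> e * (rpow a (p - 2) * a\<^sup>2 * z powr (2 * b + p)) + C2 * (z powr (2 * b) * d powr p)"
    using Y2[OF p epos] by blast
  define C where "C = (2 / G) * (A * (4 * e / D) * 2 * k * C1 + A * (C1 + C2))"
  have Cpos: "C > 0" unfolding C_def using Gpos Apos epos Dpos k1 C1 C2
    by (intro mult_pos_pos add_pos_pos) auto
  show ?thesis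
  proof (rule exI[of _ C], rule conjI[OF Cpos], intro allI impI)
    fix w g u \<psi> :: "'a \<Rightarrow> real" and Du D\<psi> :: "'a \<Rightarrow> 'a"
    assume H: "loc_integrable w \<and> loc_integrable g \<and> (AE x in lebesgue. w x > 0) \<and> (AE x in lebesgue. g x > 0) \<and>
     C1_grad u Du \<and> (\<forall>x. u x > 0) \<and> (\<forall>x. u x \<le> M) \<and> weak_solution p w g u Du \<and> stable p w g u Du \<and>
     C1c_grad \<psi> D\<psi> \<and> (\<forall>x. 0 \<le> \<psi> x)"
    then have wl: "loc_integrable w" and gl: "loc_integrable g" and wpos: "AE x in lebesgue. w x > 0"
      and gpos: "AE x in lebesgue. g x > 0" and uC: "C1_grad u Du" and upos: "\<And>x. u x > 0"
      and uM: "\<And>x. u x \<le> M" and weak: "weak_solution p w g u Du" and stab: "stable p w g u Du"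
      and psiC: "C1c_grad \<psi> D\<psi>" and psi0: "\<And>x. 0 \<le> \<psi> x" by blast+

    have psiC1: "C1_grad \<psi> D\<psi>" and psisupp: "compact (closure {x. \<psi> x \<noteq> 0})"
      using psiC unfolding C1c_grad_def by auto
    define S where "S = closure {x. \<psi> x \<noteq> 0}"
    have cS: "compact S" using psisupp unfolding S_def .
    have outS: "\<And>x. x \<notin> S \<Longrightarrow> \<psi> x = 0" unfolding S_def by (meson closure_subset mem_Collect_eq subsetD)
    define z where "z = (\<lambda>x. \<psi> x / u x)"
    define Dz where "Dz = (\<lambda>x. (1 / u x) *\<^sub>R D\<psi> x - (\<psi> x / (u x)\<^sup>2) *\<^sub>R Du x)"
    have zC: "C1_grad z Dz" unfolding z_def Dz_def by (rule C1_div[OF psiC1 uC upos])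
    have z0: "\<And>x. z x \<ge> 0" unfolding z_def using psi0 upos by (simp add: less_imp_le)
    have zS: "\<And>x. \<psi> x = 0 \<Longrightarrow> z x = 0" unfolding z_def by simp
    have uDz: "\<And>x. u x *\<^sub>R Dz x = D\<psi> x - z x *\<^sub>R Du x"
    proof -
      fix x have "u x \<noteq> 0" using upos[of x] by simp
      then show "u x *\<^sub>R Dz x = D\<psi> x - z x *\<^sub>R Du x"
        unfolding Dz_def z_def by (simp add: scaleR_diff_right power2_eq_square)
    qed
    define r where "r = 2 * b + p"
    have kr: "2 * k = r" unfolding k_def al_def r_def by (simp add: field_simps)
    have r1: "r > 1" using k1 kr by simp
    have Dr: "D = r - 1" unfolding D_def r_def al_def by (simp add: field_simps)
    define \<phi> where "\<phi> = (\<lambda>x. u x * z x powr k)"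
    define D\<phi> where "D\<phi> = (\<lambda>x. u x *\<^sub>R ((k * z x powr (k - 1)) *\<^sub>R Dz x) + z x powr k *\<^sub>R Du x)"
    define \<phi>2 where "\<phi>2 = (\<lambda>x. u x * z x powr r)"
    define D\<phi>2 where "D\<phi>2 = (\<lambda>x. u x *\<^sub>R ((r * z x powr (r - 1)) *\<^sub>R Dz x) + z x powr r *\<^sub>R Du x)"
    have phiC: "C1c_grad \<phi> D\<phi>"
      unfolding C1c_grad_def
    proof
      show "C1_grad \<phi> D\<phi>" unfolding \<phi>_def D\<phi>_def by (rule C1_mult[OF uC C1_powr[OF zC z0 k1]])
      show "compact (closure {x. \<phi> x \<noteq> 0})"
        by (rule support_sub[OF psisupp]) (simp add: \<phi>_def zS)
    qed
    have phi2C: "C1c_grad \<phi>2 D\<phi>2"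
      unfolding C1c_grad_def
    proof
      show "C1_grad \<phi>2 D\<phi>2" unfolding \<phi>2_def D\<phi>2_def by (rule C1_mult[OF uC C1_powr[OF zC z0 r1]])
      show "compact (closure {x. \<phi>2 x \<noteq> 0})"
        by (rule support_sub[OF psisupp]) (simp add: \<phi>2_def zS)
    qed

    have pk: "\<And>x. z x powr k * z x powr k = z x powr r" using kr by (simp flip: powr_add)
    have pk1: "\<And>x. z x powr k * z x powr (k - 1) = z x powr (r - 1)" using kr
      by (simp flip: powr_add add: algebra_simps)
    have pk2: "\<And>x. z x powr (k - 1) * z x powr (k - 1) = z x powr (r - 2)" using kr
      by (simp flip: powr_add add: algebra_simps)
    have pr1: "\<And>x. z x powr (r - 1) * z x = z x powr r"
    proof -
      fix x
      have "z x powr (r - 1 + 1) = z x powr (r - 1) * z x powr 1" by (rule powr_add)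
      moreover have "z x powr 1 = z x" using z0[of x] by simp
      ultimately show "z x powr (r - 1) * z x = z x powr r" by simp
    qed
    have pk0: "\<And>x. z x powr (k - 1) * z x = z x powr k"
    proof -
      fix x
      have "z x powr (k - 1 + 1) = z x powr (k - 1) * z x powr 1" by (rule powr_add)
      moreover have "z x powr 1 = z x" using z0[of x] by simp
      ultimately show "z x powr (k - 1) * z x = z x powr k" by simp
    qed
    have Dphi2e: "\<And>x. D\<phi>2 x = (r * z x powr (r - 1)) *\<^sub>R (D\<psi> x - z x *\<^sub>R Du x) + z x powr r *\<^sub>R Du x"
      unfolding D\<phi>2_def uDz[symmetric] by (simp add: scaleR_scaleR mult.commute)
    have Dphie: "\<And>x. D\<phi> x = ((1 - k) * z x powr k) *\<^sub>R Du x + (k * z x powr (k - 1)) *\<^sub>R D\<psi> x"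
    proof -
      fix x
      have "D\<phi> x = (k * z x powr (k - 1)) *\<^sub>R (D\<psi> x - z x *\<^sub>R Du x) + z x powr k *\<^sub>R Du x"
        unfolding D\<phi>_def uDz[symmetric] by (simp add: scaleR_scaleR mult.commute)
      also have "\<dots> = ((1 - k) * z x powr k) *\<^sub>R Du x + (k * z x powr (k - 1)) *\<^sub>R D\<psi> x"
        using pk0[of x] by (simp add: algebra_simps scaleR_diff_right)
      finally show "D\<phi> x = ((1 - k) * z x powr k) *\<^sub>R Du x + (k * z x powr (k - 1)) *\<^sub>R D\<psi> x" .
    qed
    have id1: "\<And>x. Du x \<bullet> D\<phi>2 x = (1 - r) * (z x powr r * (norm (Du x))\<^sup>2) + r * (z x powr (r - 1) * (Du x \<bullet> D\<psi> x))"
    proof -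
      fix x
      have "Du x \<bullet> D\<phi>2 x = r * z x powr (r - 1) * (Du x \<bullet> D\<psi> x) - r * (z x powr (r - 1) * z x) * (Du x \<bullet> Du x) + z x powr r * (Du x \<bullet> Du x)"
        unfolding Dphi2e by (simp add: inner_add_right inner_diff_right algebra_simps)
      then show "Du x \<bullet> D\<phi>2 x = (1 - r) * (z x powr r * (norm (Du x))\<^sup>2) + r * (z x powr (r - 1) * (Du x \<bullet> D\<psi> x))"
        unfolding pr1 by (simp add: power2_norm_eq_inner algebra_simps)
    qed
    have id2: "\<And>x. (norm (D\<phi> x))\<^sup>2 = (1 - k)\<^sup>2 * (z x powr r * (norm (Du x))\<^sup>2)
        + 2 * k * (1 - k) * (z x powr (r - 1) * (Du x \<bullet> D\<psi> x)) + k\<^sup>2 * (z x powr (r - 2) * (norm (D\<psi> x))\<^sup>2)"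
    proof -
      fix x
      show "(norm (D\<phi> x))\<^sup>2 = (1 - k)\<^sup>2 * (z x powr r * (norm (Du x))\<^sup>2)
        + 2 * k * (1 - k) * (z x powr (r - 1) * (Du x \<bullet> D\<psi> x)) + k\<^sup>2 * (z x powr (r - 2) * (norm (D\<psi> x))\<^sup>2)"
        unfolding Dphie sq_comb using pk[of x] pk1[of x] pk2[of x]
        by (simp add: power2_eq_square algebra_simps)
    qed

    have cu: "continuous_on UNIV u" using C1_cont[OF uC] .
    have cDu: "continuous_on UNIV Du" using uC unfolding C1_grad_def by blast
    have cDpsi: "continuous_on UNIV D\<psi>" using psiC1 unfolding C1_grad_def by blast
    have cz: "continuous_on UNIV z" using C1_cont[OF zC] .
    have czp: "\<And>c. c > 0 \<Longrightarrow> continuous_on UNIV (\<lambda>x. z x powr c)"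
      by (rule continuous_on_powr'[OF cz continuous_on_const]) (use z0 in auto)
    have cR: "continuous_on UNIV (\<lambda>x. rpow (norm (Du x)) (p - 2))"
      by (rule rpow_cont[OF continuous_on_norm[OF cDu]]) (use p in auto)
    have cdp: "continuous_on UNIV (\<lambda>x. norm (D\<psi> x) powr p)"
      by (rule continuous_on_powr'[OF continuous_on_norm[OF cDpsi] continuous_on_const]) (use p in auto)
    have cex: "continuous_on UNIV (\<lambda>x. exp (1 / u x))"
      using upos by (intro continuous_on_exp continuous_on_divide continuous_on_const cu) (auto simp: less_imp_neq[symmetric])
    have intW: "\<And>h. continuous_on UNIV h \<Longrightarrow> (\<And>x. \<psi> x = 0 \<Longrightarrow> h x = 0) \<Longrightarrow> integrable lebesgue (\<lambda>x. w x * h x)"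
      using int_loc[OF wl cS] outS by metis
    have intG: "\<And>h. continuous_on UNIV h \<Longrightarrow> (\<And>x. \<psi> x = 0 \<Longrightarrow> h x = 0) \<Longrightarrow> integrable lebesgue (\<lambda>x. g x * h x)"
      using int_loc[OF gl cS] outS by metis
    have rpos: "r > 0" "r - 1 > 0" "r - 2 > 0" "2 * b > 0" using r1 b p unfolding r_def by auto
    define hI where "hI = (\<lambda>x. rpow (norm (Du x)) (p - 2) * (norm (Du x))\<^sup>2 * z x powr r)"
    define hJ where "hJ = (\<lambda>x. rpow (norm (Du x)) (p - 2) * z x powr (r - 1) * (Du x \<bullet> D\<psi> x))"
    define hK where "hK = (\<lambda>x. rpow (norm (Du x)) (p - 2) * z x powr (r - 2) * (norm (D\<psi> x))\<^sup>2)"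
    define hT where "hT = (\<lambda>x. z x powr (2 * b) * norm (D\<psi> x) powr p)"
    define hE1 where "hE1 = (\<lambda>x. exp (1 / u x) * u x * z x powr r)"
    define hE2 where "hE2 = (\<lambda>x. exp (1 / u x) * z x powr r)"
    define hL where "hL = (\<lambda>x. z x powr r)"
    have iI: "integrable lebesgue (\<lambda>x. w x * hI x)" unfolding hI_def
      by (rule intW) (intro continuous_on_mult continuous_on_power continuous_on_norm cR czp cDu rpos, simp add: zS rpos)
    have iJ: "integrable lebesgue (\<lambda>x. w x * hJ x)" unfolding hJ_def
      by (rule intW) (intro continuous_on_mult continuous_on_inner cR czp cDu cDpsi rpos, simp add: zS rpos)
    have iK: "integrable lebesgue (\<lambda>x. w x * hK x)" unfolding hK_def
      by (rule intW) (intro continuous_on_mult continuous_on_power continuous_on_norm cR czp cDpsi rpos, simp add: zS rpos)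
    have iT: "integrable lebesgue (\<lambda>x. w x * hT x)" unfolding hT_def
      by (rule intW) (intro continuous_on_mult cdp czp rpos, simp add: zS rpos)
    have iE1: "integrable lebesgue (\<lambda>x. g x * hE1 x)" unfolding hE1_def
      by (rule intG) (intro continuous_on_mult cex cu czp rpos, simp add: zS rpos)
    have iE2: "integrable lebesgue (\<lambda>x. g x * hE2 x)" unfolding hE2_def
      by (rule intG) (intro continuous_on_mult cex czp rpos, simp add: zS rpos)
    have iL: "integrable lebesgue (\<lambda>x. g x * hL x)" unfolding hL_def
      by (rule intG) (intro czp rpos, simp add: zS rpos)
    define I where "I = (\<integral>x. w x * hI x \<partial>lebesgue)"
    define J where "J = (\<integral>x. w x * hJ x \<partial>lebesgue)"
    define K where "K = (\<integral>x. w x * hK x \<partial>lebesgue)"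
    define T where "T = (\<integral>x. w x * hT x \<partial>lebesgue)"
    define E1 where "E1 = (\<integral>x. g x * hE1 x \<partial>lebesgue)"
    define E2 where "E2 = (\<integral>x. g x * hE2 x \<partial>lebesgue)"
    define L where "L = (\<integral>x. g x * hL x \<partial>lebesgue)"

    have weq: "(\<integral>x. w x * rpow (norm (Du x)) (p - 2) * (Du x \<bullet> D\<phi>2 x) \<partial>lebesgue)
        = (\<integral>x. g x * fnl (u x) * \<phi>2 x \<partial>lebesgue)"
      using weak phi2C unfolding weak_solution_def by blast
    have "(\<integral>x. w x * rpow (norm (Du x)) (p - 2) * (Du x \<bullet> D\<phi>2 x) \<partial>lebesgue)
        = (\<integral>x. (1 - r) * (w x * hI x) + r * (w x * hJ x) \<partial>lebesgue)"
      by (rule Bochner_Integration.integral_cong) (simp_all add: id1 hI_def hJ_def algebra_simps)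
    also have "\<dots> = (1 - r) * I + r * J" using iI iJ unfolding I_def J_def by simp
    finally have weq1: "(\<integral>x. w x * rpow (norm (Du x)) (p - 2) * (Du x \<bullet> D\<phi>2 x) \<partial>lebesgue) = (1 - r) * I + r * J" .
    have "(\<integral>x. g x * fnl (u x) * \<phi>2 x \<partial>lebesgue) = (\<integral>x. - (g x * hE1 x) \<partial>lebesgue)"
      by (rule Bochner_Integration.integral_cong) (simp_all add: fnl_def \<phi>2_def hE1_def)
    also have "\<dots> = - E1" unfolding E1_def by simp
    finally have "(1 - r) * I + r * J = - E1" using weq weq1 by simp
    then have W: "D * I = E1 + 2 * k * J" unfolding Dr kr by (simp add: algebra_simps)
    define Q where "Q = (\<integral>x. w x * rpow (norm (Du x)) (p - 2) * (norm (D\<phi> x))\<^sup>2 \<partial>lebesgue)"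
    define Mid where "Mid = (\<integral>x. (if Du x = 0 then 0
                         else w x * norm (Du x) powr (p - 4) * (Du x \<bullet> D\<phi> x)\<^sup>2) \<partial>lebesgue)"
    have st: "Q + (p - 2) * Mid - (\<integral>x. g x * deriv fnl (u x) * (\<phi> x)\<^sup>2 \<partial>lebesgue) \<ge> 0"
      using stab phiC unfolding stable_def Q_def Mid_def by blast
    have "Q = (\<integral>x. (1 - k)\<^sup>2 * (w x * hI x) + 2 * k * (1 - k) * (w x * hJ x) + k\<^sup>2 * (w x * hK x) \<partial>lebesgue)"
      unfolding Q_def
      by (rule Bochner_Integration.integral_cong) (simp_all add: id2 hI_def hJ_def hK_def algebra_simps)
    also have "\<dots> = (1 - k)\<^sup>2 * I + 2 * k * (1 - k) * J + k\<^sup>2 * K"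
      using iI iJ iK unfolding I_def J_def K_def by simp
    finally have Qe: "Q = (1 - k)\<^sup>2 * I + 2 * k * (1 - k) * J + k\<^sup>2 * K" .
    have "(\<integral>x. g x * deriv fnl (u x) * (\<phi> x)\<^sup>2 \<partial>lebesgue) = (\<integral>x. g x * hE2 x \<partial>lebesgue)"
    proof (rule Bochner_Integration.integral_cong)
      fix x
      have ux: "u x > 0" using upos .
      have "g x * deriv fnl (u x) * (\<phi> x)\<^sup>2 = g x * (exp (1 / u x) / (u x)\<^sup>2 * ((u x)\<^sup>2 * (z x powr k * z x powr k)))"
        by (simp add: deriv_fnl[OF ux] \<phi>_def power2_eq_square algebra_simps)
      also have "\<dots> = g x * hE2 x" using ux unfolding pk hE2_def by simp
      finally show "g x * deriv fnl (u x) * (\<phi> x)\<^sup>2 = g x * hE2 x" .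
    qed simp
    then have st2: "Q + (p - 2) * Mid - E2 \<ge> 0" using st unfolding E2_def by simp

    have cDphi: "continuous_on UNIV D\<phi>" using phiC unfolding C1c_grad_def C1_grad_def by blast
    have k0: "k > 0" "k - 1 > 0" using k1 by auto
    have iQ: "integrable lebesgue (\<lambda>x. w x * (rpow (norm (Du x)) (p - 2) * (norm (D\<phi> x))\<^sup>2))"
    proof (rule intW)
      show "continuous_on UNIV (\<lambda>x. rpow (norm (Du x)) (p - 2) * (norm (D\<phi> x))\<^sup>2)"
        by (intro continuous_on_mult continuous_on_power continuous_on_norm cR cDphi)
      fix x assume "\<psi> x = 0"
      then have "z x = 0" by (rule zS)
      then have "D\<phi> x = 0" unfolding Dphie using k0 by simp
      then show "rpow (norm (Du x)) (p - 2) * (norm (D\<phi> x))\<^sup>2 = 0" by simp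
    qed
    have Qpt: "AE x in lebesgue. (if Du x = 0 then 0 else w x * norm (Du x) powr (p - 4) * (Du x \<bullet> D\<phi> x)\<^sup>2)
        \<le> w x * rpow (norm (Du x)) (p - 2) * (norm (D\<phi> x))\<^sup>2"
      using wpos
    proof eventually_elim
      case (elim x)
      show ?case
      proof (cases "Du x = 0")
        case True
        then show ?thesis using elim rpow_nn[of "norm (Du x)" "p - 2"] by simp
      next
        case False
        then have a: "norm (Du x) > 0" by simp
        have cs: "(Du x \<bullet> D\<phi> x)\<^sup>2 \<le> (norm (Du x))\<^sup>2 * (norm (D\<phi> x))\<^sup>2"
        proof -
          have "\<bar>Du x \<bullet> D\<phi> x\<bar> \<le> norm (Du x) * norm (D\<phi> x)" by (rule Cauchy_Schwarz_ineq2)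
          then have "\<bar>Du x \<bullet> D\<phi> x\<bar>\<^sup>2 \<le> (norm (Du x) * norm (D\<phi> x))\<^sup>2" by (rule power_mono) simp
          then show ?thesis by (simp add: power_mult_distrib)
        qed
        have "w x * norm (Du x) powr (p - 4) * (Du x \<bullet> D\<phi> x)\<^sup>2
            \<le> w x * norm (Du x) powr (p - 4) * ((norm (Du x))\<^sup>2 * (norm (D\<phi> x))\<^sup>2)"
          using cs elim by (intro mult_left_mono) auto
        also have "\<dots> = w x * (norm (Du x) powr (p - 4) * norm (Du x) powr 2) * (norm (D\<phi> x))\<^sup>2"
          using a by (simp add: powr_numeral algebra_simps)
        also have "norm (Du x) powr (p - 4) * norm (Du x) powr 2 = rpow (norm (Du x)) (p - 2)"
        proof -
          have "norm (Du x) powr (p - 4) * norm (Du x) powr 2 = norm (Du x) powr (p - 4 + 2)"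
            by (rule powr_add[symmetric])
          also have "p - 4 + 2 = p - 2" by simp
          finally show ?thesis using a by (simp add: rpow_def)
        qed
        finally show ?thesis using False by simp
      qed
    qed
    have Q0: "Q \<ge> 0" unfolding Q_def
      by (rule integral_nonneg_AE) (use wpos in \<open>eventually_elim, simp add: rpow_nn\<close>)
    have MidQ: "Mid \<le> Q"
    proof (cases "integrable lebesgue (\<lambda>x. (if Du x = 0 then 0 else w x * norm (Du x) powr (p - 4) * (Du x \<bullet> D\<phi> x)\<^sup>2))")
      case True
      show ?thesis unfolding Mid_def Q_def
        by (rule integral_mono_AE[OF True _ Qpt]) (use iQ in \<open>simp add: mult.assoc\<close>)
    next
      case False
      then have "Mid = 0" unfolding Mid_def by (rule not_integrable_integral_eq)
      then show ?thesis using Q0 by simp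
    qed
    have "(p - 2) * Mid \<le> (p - 2) * Q" using MidQ p by (intro mult_left_mono) auto
    then have E2Q: "E2 \<le> (p - 1) * Q" using st2 by (simp add: algebra_simps)
    have S: "E2 \<le> (p - 1) * (al\<^sup>2 * I - 2 * k * al * J + k\<^sup>2 * K)"
    proof -
      have "(1 - k)\<^sup>2 = al\<^sup>2" "2 * k * (1 - k) = - (2 * k * al)" unfolding k_def by (simp_all add: power2_eq_square algebra_simps)
      then have "Q = al\<^sup>2 * I - 2 * k * al * J + k\<^sup>2 * K" unfolding Qe by simp
      then show ?thesis using E2Q by simp
    qed

    have E1M: "E1 \<le> M * E2"
    proof -
      have "E1 \<le> (\<integral>x. M * (g x * hE2 x) \<partial>lebesgue)" unfolding E1_def
      proof (rule integral_mono_AE[OF iE1])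
        show "integrable lebesgue (\<lambda>x. M * (g x * hE2 x))" using iE2 by simp
        show "AE x in lebesgue. g x * hE1 x \<le> M * (g x * hE2 x)"
          using gpos
        proof eventually_elim
          case (elim x)
          have "exp (1 / u x) * u x * z x powr r \<le> exp (1 / u x) * M * z x powr r"
            using uM[of x] by (intro mult_right_mono mult_left_mono) auto
          then have "g x * (exp (1 / u x) * u x * z x powr r) \<le> g x * (exp (1 / u x) * M * z x powr r)"
            using elim by (intro mult_left_mono) auto
          then show ?case unfolding hE1_def hE2_def by (simp add: algebra_simps)
        qed
      qed
      also have "\<dots> = M * E2" unfolding E2_def by simp
      finally show ?thesis .
    qed
    have I0: "I \<ge> 0" unfolding I_def
      by (rule integral_nonneg_AE) (use wpos in \<open>eventually_elim, simp add: hI_def rpow_nn\<close>)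
    have K0: "K \<ge> 0" unfolding K_def
      by (rule integral_nonneg_AE) (use wpos in \<open>eventually_elim, simp add: hK_def rpow_nn\<close>)
    have T0: "T \<ge> 0" unfolding T_def
      by (rule integral_nonneg_AE) (use wpos in \<open>eventually_elim, simp add: hT_def\<close>)
    have E20: "E2 \<ge> 0" unfolding E2_def
      by (rule integral_nonneg_AE) (use gpos in \<open>eventually_elim, simp add: hE2_def\<close>)
    have YJ: "\<bar>J\<bar> \<le> e * I + C1 * T"
    proof -
      have "\<bar>J\<bar> \<le> (\<integral>x. \<bar>w x * hJ x\<bar> \<partial>lebesgue)" unfolding J_def by (rule integral_abs_bound)
      also have "\<dots> \<le> (\<integral>x. e * (w x * hI x) + C1 * (w x * hT x) \<partial>lebesgue)"
      proof (rule integral_mono_AE)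
        show "integrable lebesgue (\<lambda>x. \<bar>w x * hJ x\<bar>)" using iJ by simp
        show "integrable lebesgue (\<lambda>x. e * (w x * hI x) + C1 * (w x * hT x))" using iI iT by simp
        show "AE x in lebesgue. \<bar>w x * hJ x\<bar> \<le> e * (w x * hI x) + C1 * (w x * hT x)"
          using wpos
        proof eventually_elim
          case (elim x)
          have cs: "\<bar>Du x \<bullet> D\<psi> x\<bar> \<le> norm (Du x) * norm (D\<psi> x)" by (rule Cauchy_Schwarz_ineq2)
          have "\<bar>hJ x\<bar> \<le> e * hI x + C1 * hT x"
            using C1(2)[OF norm_ge_zero z0 norm_ge_zero cs] unfolding hJ_def hI_def hT_def r_def by simp
          then have "w x * \<bar>hJ x\<bar> \<le> w x * (e * hI x + C1 * hT x)" using elim by (intro mult_left_mono) auto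
          then show ?case using elim by (simp add: abs_mult algebra_simps)
        qed
      qed
      also have "\<dots> = e * I + C1 * T" using iI iT unfolding I_def T_def by simp
      finally show ?thesis .
    qed
    have YK: "K \<le> e * I + C2 * T"
    proof -
      have "K \<le> (\<integral>x. e * (w x * hI x) + C2 * (w x * hT x) \<partial>lebesgue)" unfolding K_def
      proof (rule integral_mono_AE[OF iK])
        show "integrable lebesgue (\<lambda>x. e * (w x * hI x) + C2 * (w x * hT x))" using iI iT by simp
        show "AE x in lebesgue. w x * hK x \<le> e * (w x * hI x) + C2 * (w x * hT x)"
          using wpos
        proof eventually_elim
          case (elim x)
          have "hK x \<le> e * hI x + C2 * hT x"
            using C2(2)[OF norm_ge_zero[of "Du x"] z0[of x] norm_ge_zero[of "D\<psi> x"]] unfolding hK_def hI_def hT_def r_def by simp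
          then have "w x * hK x \<le> w x * (e * hI x + C2 * hT x)" using elim by (intro mult_left_mono) auto
          then show ?case by (simp add: algebra_simps)
        qed
      qed
      also have "\<dots> = e * I + C2 * T" using iI iT unfolding I_def T_def by simp
      finally show ?thesis .
    qed
    have LE2: "L \<le> E2" unfolding L_def E2_def
    proof (rule integral_mono_AE[OF iL iE2])
      show "AE x in lebesgue. g x * hL x \<le> g x * hE2 x"
        using gpos
      proof eventually_elim
        case (elim x)
        have "exp (1 / u x) \<ge> 1" using upos[of x] by simp
        then have "1 * z x powr r \<le> exp (1 / u x) * z x powr r" by (intro mult_right_mono) auto
        then show ?case unfolding hL_def hE2_def using elim by (intro mult_left_mono) auto
      qed
    qed
    have G': "D - (p - 1) * al\<^sup>2 * M > 0" using Gpos unfolding G_def .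
    have e2': "((p - 1) * 2 * k * al * (al + 1) + (p - 1) * D * k\<^sup>2) * (4 * e / D) * M
              \<le> (D - (p - 1) * al\<^sup>2 * M) / 2" using e2 unfolding A_def G_def .
    have "E2 \<le> C * T"
      using arith_core[OF D_def al k_def p M G' W S E1M I0 K0 E20 T0 YJ YK epos e1 e2']
      unfolding C_def A_def G_def .
    then have "L \<le> C * T" using LE2 by simp
    then show "integrable lebesgue (\<lambda>x. g x * (\<psi> x / u x) powr (2 * b + p)) \<and>
     integrable lebesgue (\<lambda>x. w x * ((\<psi> x / u x) powr (2 * b) * norm (D\<psi> x) powr p)) \<and>
     (\<integral>x. g x * (\<psi> x / u x) powr (2 * b + p) \<partial>lebesgue)
       \<le> C * (\<integral>x. w x * ((\<psi> x / u x) powr (2 * b) * norm (D\<psi> x) powr p) \<partial>lebesgue)"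
      using iL iT unfolding L_def T_def hL_def hT_def z_def r_def by blast
  qed
qed


lemma cond_p2:
  fixes M b :: real assumes M: "M > 0" and b: "b > 0" and lt: "b < 1 / M + sqrt (1 / M + 1 / M\<^sup>2)"
  shows "M * b\<^sup>2 < 2 * b + 1"
proof -
  define t where "t = 1 / M"
  have t: "t > 0" using M unfolding t_def by simp
  define s where "s = sqrt (t + t\<^sup>2)"
  have tt: "t + t\<^sup>2 \<ge> 0" using t by (intro add_nonneg_nonneg) auto
  have s2: "s\<^sup>2 = t + t\<^sup>2" unfolding s_def by (rule real_sqrt_pow2[OF tt])
  have s0: "s \<ge> 0" unfolding s_def using tt by simp
  have "t\<^sup>2 < s\<^sup>2" using s2 t by simp
  then have st: "t < s" using s0 t by (smt (verit) power_mono)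
  have lt': "b - t < s" using lt unfolding s_def t_def by (simp add: power_one_over)
  have "b - t > - s" using b st by simp
  then have "\<bar>b - t\<bar> < s" using lt' by simp
  then have "\<bar>b - t\<bar>\<^sup>2 < s\<^sup>2" using s0 by (intro power_strict_mono) auto
  then have "(b - t)\<^sup>2 < t + t\<^sup>2" using s2 by simp
  then have "b\<^sup>2 < t * (2 * b + 1)" by (simp add: power2_eq_square algebra_simps)
  then have "M * b\<^sup>2 < M * (t * (2 * b + 1))" using M by simp
  also have "M * (t * (2 * b + 1)) = 2 * b + 1" unfolding t_def using M by simp
  finally show ?thesis .
qed
lemma cond_pgt2:
  fixes M p b :: real assumes M: "M > 0" and b: "b > 0" and p: "p > 2"
    and lt: "b < 2 / (M * (p - 1)) - (p - 1) / 2"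
  shows "(p - 1) * (b + (p - 2) / 2)\<^sup>2 * M < 2 * (b + (p - 2) / 2) + 1"
proof -
  define al where "al = b + (p - 2) / 2"
  have al: "al > 0" using b p unfolding al_def by (simp add: add_pos_nonneg)
  have "al + 1 / 2 < 2 / (M * (p - 1))" using lt unfolding al_def by (simp add: field_simps)
  then have "(M * (p - 1)) * (al + 1 / 2) < (M * (p - 1)) * (2 / (M * (p - 1)))"
    using M p by (intro mult_strict_left_mono) auto
  moreover have "(M * (p - 1)) * (2 / (M * (p - 1))) = 2" using M p by simp
  moreover have "(M * (p - 1)) * (2 * al + 1) = 2 * ((M * (p - 1)) * (al + 1 / 2))" by (simp add: field_simps)
  ultimately have h: "(M * (p - 1)) * (2 * al + 1) < 4" by linarith
  have "(p - 1) * al\<^sup>2 * M * (2 * al + 1) = al\<^sup>2 * ((M * (p - 1)) * (2 * al + 1))" by (simp add: algebra_simps)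
  also have "\<dots> < al\<^sup>2 * 4" using h al by (intro mult_strict_left_mono) auto
  also have "\<dots> \<le> (2 * al + 1) * (2 * al + 1)" using al by (simp add: power2_eq_square algebra_simps)
  finally have "(p - 1) * al\<^sup>2 * M * (2 * al + 1) < (2 * al + 1) * (2 * al + 1)" .
  then have "(p - 1) * al\<^sup>2 * M < 2 * al + 1" using al
    by (meson mult_less_cancel_right_pos add_pos_pos zero_less_one mult_pos_pos zero_less_numeral)
  then show ?thesis unfolding al_def .
qed
theorem theorem3p5:
  fixes p M m :: real
  assumes hp: "p \<ge> 2"
    and hM: "M > 0" "p > 2 \<Longrightarrow> M < 4 / (p - 1)\<^sup>2"
  shows "\<forall>\<beta>. 0 < \<beta> \<and> \<beta> < t_p p M \<longrightarrow>
    (\<exists>c>0. \<forall>(w :: 'a::euclidean_space \<Rightarrow> real) g u Du.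
       loc_integrable w \<and> loc_integrable g \<and>
       (AE x in lebesgue. w x > 0) \<and> (AE x in lebesgue. g x > 0) \<and>
       esssup lebesgue (\<lambda>x. ereal \<bar>1 / g x\<bar>) = ereal m \<and>
       C1_grad u Du \<and> (\<forall>x. u x > 0) \<and> (\<forall>x. u x \<le> M) \<and>
       weak_solution p w g u Du \<and> stable p w g u Du \<longrightarrow>
       (\<forall>\<psi> D\<psi>. C1c_grad \<psi> D\<psi> \<and> (\<forall>x. 0 \<le> \<psi> x \<and> \<psi> x \<le> 1) \<longrightarrow>
          (\<integral>\<^sup>+x. ennreal (g x * (\<psi> x / u x) powr (2 * \<beta> + p)) \<partial>lebesgue)
          \<le> ennreal c * (\<integral>\<^sup>+x. ennreal (w x powr ((2 * \<beta> + p) / p)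
                   * norm (D\<psi> x) powr (p * ((2 * \<beta> + p) / p))) \<partial>lebesgue)))"
  proof (intro allI impI)
  fix \<beta> :: real
  assume hb: "0 < \<beta> \<and> \<beta> < t_p p M"
  then have b: "\<beta> > 0" and bt: "\<beta> < t_p p M" by auto
  have cond: "(p - 1) * (\<beta> + (p - 2) / 2)\<^sup>2 * M < 2 * (\<beta> + (p - 2) / 2) + 1"
  proof (cases "p = 2")
    case True
    then show ?thesis using cond_p2[OF hM(1) b] bt unfolding t_p_def by (simp add: mult.commute)
  next
    case False
    then have "p > 2" using hp by simp
    then show ?thesis using cond_pgt2[OF hM(1) b] bt hM(2) unfolding t_p_def by simp
  qed
  obtain C where C: "C > 0" and CC: "\<forall>(w :: 'a::euclidean_space \<Rightarrow> real) g u Du \<psi> D\<psi>.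
     loc_integrable w \<and> loc_integrable g \<and> (AE x in lebesgue. w x > 0) \<and> (AE x in lebesgue. g x > 0) \<and>
     C1_grad u Du \<and> (\<forall>x. u x > 0) \<and> (\<forall>x. u x \<le> M) \<and> weak_solution p w g u Du \<and> stable p w g u Du \<and>
     C1c_grad \<psi> D\<psi> \<and> (\<forall>x. 0 \<le> \<psi> x) \<longrightarrow>
     integrable lebesgue (\<lambda>x. g x * (\<psi> x / u x) powr (2 * \<beta> + p)) \<and>
     integrable lebesgue (\<lambda>x. w x * ((\<psi> x / u x) powr (2 * \<beta>) * norm (D\<psi> x) powr p)) \<and>
     (\<integral>x. g x * (\<psi> x / u x) powr (2 * \<beta> + p) \<partial>lebesgue)
       \<le> C * (\<integral>x. w x * ((\<psi> x / u x) powr (2 * \<beta>) * norm (D\<psi> x) powr p) \<partial>lebesgue)"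
    using core[OF hp hM(1) b cond] by blast
  define q where "q = (2 * \<beta> + p) / (2 * \<beta>)"
  define q' where "q' = (2 * \<beta> + p) / p"
  have q1: "q > 1" using b hp unfolding q_def by (simp add: field_simps)
  have qq': "q / (q - 1) = q'" using b hp unfolding q_def q'_def by (simp add: field_simps)
  have bq: "2 * \<beta> * q = 2 * \<beta> + p" using b unfolding q_def by simp
  have q'0: "q' > 0" using b hp unfolding q'_def by simp
  define e' where "e' = 1 / (2 * C)"
  have e': "e' > 0" using C unfolding e'_def by simp
  obtain C3 where C3: "C3 > 0" "\<And>x y. x \<ge> 0 \<Longrightarrow> y \<ge> 0 \<Longrightarrow> x * y \<le> e' * x powr q + C3 * y powr (q / (q - 1))"
    using young_eps[OF q1 e'] by blast
  define mm where "mm = max m 1"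
  define C3' where "C3' = C3 * mm powr (q' / q)"
  have C3': "C3' > 0" using C3 unfolding C3'_def mm_def by simp
  define c where "c = 2 * C * C3'"
  have c: "c > 0" using C C3' unfolding c_def by simp
  show "\<exists>c>0. \<forall>(w :: 'a::euclidean_space \<Rightarrow> real) g u Du.
       loc_integrable w \<and> loc_integrable g \<and>
       (AE x in lebesgue. w x > 0) \<and> (AE x in lebesgue. g x > 0) \<and>
       esssup lebesgue (\<lambda>x. ereal \<bar>1 / g x\<bar>) = ereal m \<and>
       C1_grad u Du \<and> (\<forall>x. u x > 0) \<and> (\<forall>x. u x \<le> M) \<and>
       weak_solution p w g u Du \<and> stable p w g u Du \<longrightarrow>
       (\<forall>\<psi> D\<psi>. C1c_grad \<psi> D\<psi> \<and> (\<forall>x. 0 \<le> \<psi> x \<and> \<psi> x \<le> 1) \<longrightarrow>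
          (\<integral>\<^sup>+x. ennreal (g x * (\<psi> x / u x) powr (2 * \<beta> + p)) \<partial>lebesgue)
          \<le> ennreal c * (\<integral>\<^sup>+x. ennreal (w x powr ((2 * \<beta> + p) / p)
                   * norm (D\<psi> x) powr (p * ((2 * \<beta> + p) / p))) \<partial>lebesgue))"
  proof (rule exI[of _ c], rule conjI[OF c], intro allI impI)
    fix w g u :: "'a \<Rightarrow> real" and Du :: "'a \<Rightarrow> 'a" and \<psi> :: "'a \<Rightarrow> real" and D\<psi> :: "'a \<Rightarrow> 'a"
    assume H: "loc_integrable w \<and> loc_integrable g \<and>
       (AE x in lebesgue. w x > 0) \<and> (AE x in lebesgue. g x > 0) \<and>
       esssup lebesgue (\<lambda>x. ereal \<bar>1 / g x\<bar>) = ereal m \<and>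
       C1_grad u Du \<and> (\<forall>x. u x > 0) \<and> (\<forall>x. u x \<le> M) \<and>
       weak_solution p w g u Du \<and> stable p w g u Du"
      and Hp: "C1c_grad \<psi> D\<psi> \<and> (\<forall>x. 0 \<le> \<psi> x \<and> \<psi> x \<le> 1)"
    have wl: "loc_integrable w" and wpos: "AE x in lebesgue. w x > 0" and gpos: "AE x in lebesgue. g x > 0"
      and es: "esssup lebesgue (\<lambda>x. ereal \<bar>1 / g x\<bar>) = ereal m" using H by blast+
    have psiC: "C1c_grad \<psi> D\<psi>" using Hp by blast
    have R: "integrable lebesgue (\<lambda>x. g x * (\<psi> x / u x) powr (2 * \<beta> + p)) \<and>
     integrable lebesgue (\<lambda>x. w x * ((\<psi> x / u x) powr (2 * \<beta>) * norm (D\<psi> x) powr p)) \<and>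
     (\<integral>x. g x * (\<psi> x / u x) powr (2 * \<beta> + p) \<partial>lebesgue)
       \<le> C * (\<integral>x. w x * ((\<psi> x / u x) powr (2 * \<beta>) * norm (D\<psi> x) powr p) \<partial>lebesgue)"
      using CC H Hp by blast
    define Li where "Li = (\<lambda>x. g x * (\<psi> x / u x) powr (2 * \<beta> + p))"
    define Ti where "Ti = (\<lambda>x. w x * ((\<psi> x / u x) powr (2 * \<beta>) * norm (D\<psi> x) powr p))"
    define Ri where "Ri = (\<lambda>x. w x powr ((2 * \<beta> + p) / p) * norm (D\<psi> x) powr (p * ((2 * \<beta> + p) / p)))"
    have iL: "integrable lebesgue Li" and iT: "integrable lebesgue Ti"
      and LT: "integral\<^sup>L lebesgue Li \<le> C * integral\<^sup>L lebesgue Ti"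
      using R unfolding Li_def Ti_def by auto

    have upos: "\<And>x. u x > 0" and psi0: "\<And>x. \<psi> x \<ge> 0" using H Hp by blast+
    have cDpsi: "continuous_on UNIV D\<psi>" using psiC unfolding C1c_grad_def C1_grad_def by blast
    have es_ae: "AE x in lebesgue. ereal \<bar>1 / g x\<bar> \<le> ereal m"
      using esssup_AE[of "\<lambda>x. ereal \<bar>1 / g x\<bar>" lebesgue] es by simp
    have L0: "AE x in lebesgue. 0 \<le> Li x" using gpos by eventually_elim (simp add: Li_def)
    have T0: "AE x in lebesgue. 0 \<le> Ti x" using wpos by eventually_elim (simp add: Ti_def)
    have R0: "\<And>x. 0 \<le> Ri x" by (simp add: Ri_def)
    have pt: "AE x in lebesgue. Ti x \<le> e' * Li x + C3' * Ri x"
      using wpos gpos es_ae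
    proof eventually_elim
      case (elim x)
      have wx: "w x > 0" and gx: "g x > 0" using elim by auto
      have gm0: "1 / g x \<le> m" using elim gx by simp
      define zz where "zz = \<psi> x / u x"
      have zz: "zz \<ge> 0" unfolding zz_def using psi0[of x] upos[of x] by simp
      define d where "d = norm (D\<psi> x)"
      have d: "d \<ge> 0" unfolding d_def by simp
      define X where "X = g x powr (1 / q) * zz powr (2 * \<beta>)"
      define Y where "Y = (1 / g x) powr (1 / q) * (w x * d powr p)"
      have X0: "X \<ge> 0" and Y0: "Y \<ge> 0" unfolding X_def Y_def using wx by auto
      have "g x powr (1 / q) * (1 / g x) powr (1 / q) = (g x * (1 / g x)) powr (1 / q)"
        using gx by (intro powr_mult[symmetric])
      also have "\<dots> = 1" using gx by simp
      finally have gg: "g x powr (1 / q) * (1 / g x) powr (1 / q) = 1" .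
      have XY: "X * Y = Ti x"
      proof -
        have "X * Y = (g x powr (1 / q) * (1 / g x) powr (1 / q)) * (w x * (zz powr (2 * \<beta>) * d powr p))"
          unfolding X_def Y_def by (simp add: algebra_simps)
        then show ?thesis unfolding gg Ti_def zz_def d_def by simp
      qed
      have Xq: "X powr q = Li x"
      proof -
        have "X powr q = (g x powr (1 / q)) powr q * (zz powr (2 * \<beta>)) powr q"
          unfolding X_def using gx zz by (simp add: powr_mult)
        also have "\<dots> = g x * zz powr (2 * \<beta> + p)"
          using gx q1 bq by (simp add: powr_powr)
        finally show ?thesis unfolding Li_def zz_def .
      qed
      have Yq: "Y powr q' = (1 / g x) powr (q' / q) * Ri x"
      proof -
        have "Y powr q' = ((1 / g x) powr (1 / q)) powr q' * (w x powr q' * (d powr p) powr q')"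
          unfolding Y_def using gx wx d by (simp add: powr_mult)
        also have "\<dots> = (1 / g x) powr (q' / q) * (w x powr q' * d powr (p * q'))"
          by (simp add: powr_powr)
        finally show ?thesis unfolding Ri_def d_def q'_def .
      qed
      have gm: "(1 / g x) powr (q' / q) \<le> mm powr (q' / q)"
        using gx gm0 q1 q'0 unfolding mm_def by (intro powr_mono2) auto
      have "Ti x = X * Y" using XY by simp
      also have "\<dots> \<le> e' * X powr q + C3 * Y powr q'" using C3(2)[OF X0 Y0] qq' by simp
      also have "\<dots> = e' * Li x + C3 * ((1 / g x) powr (q' / q) * Ri x)" unfolding Xq Yq ..
      also have "C3 * ((1 / g x) powr (q' / q) * Ri x) \<le> C3 * (mm powr (q' / q) * Ri x)"
        using gm C3(1) R0[of x] by (intro mult_left_mono mult_right_mono) auto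
      finally show ?case unfolding C3'_def by (simp add: algebra_simps)
    qed
    have mL: "Li \<in> borel_measurable lebesgue" using iL by (rule borel_measurable_integrable)
    have mw: "w \<in> borel_measurable lebesgue" using wl by (rule w_meas)
    have mD: "D\<psi> \<in> borel_measurable lebesgue" using cDpsi by (rule cont_meas_leb)
    have mR: "Ri \<in> borel_measurable lebesgue" unfolding Ri_def
      using mw mD by measurable
    define IL where "IL = integral\<^sup>L lebesgue Li"
    define IT where "IT = integral\<^sup>L lebesgue Ti"
    have IL0: "IL \<ge> 0" unfolding IL_def using L0 by (rule integral_nonneg_AE)
    have eL: "(\<integral>\<^sup>+x. ennreal (Li x) \<partial>lebesgue) = ennreal IL"
      unfolding IL_def by (rule nn_integral_eq_integral[OF iL L0])
    have eT: "(\<integral>\<^sup>+x. ennreal (Ti x) \<partial>lebesgue) = ennreal IT"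
      unfolding IT_def by (rule nn_integral_eq_integral[OF iT T0])
    have "ennreal IT \<le> (\<integral>\<^sup>+x. ennreal e' * ennreal (Li x) + ennreal C3' * ennreal (Ri x) \<partial>lebesgue)"
      unfolding eT[symmetric]
    proof (rule nn_integral_mono_AE)
      show "AE x in lebesgue. ennreal (Ti x) \<le> ennreal e' * ennreal (Li x) + ennreal C3' * ennreal (Ri x)"
        using pt L0
      proof eventually_elim
        case (elim x)
        have "ennreal (Ti x) \<le> ennreal (e' * Li x + C3' * Ri x)" using elim by (intro ennreal_leI) auto
        also have "\<dots> = ennreal e' * ennreal (Li x) + ennreal C3' * ennreal (Ri x)"
          using elim e' C3' R0[of x] by (simp add: ennreal_mult)
        finally show ?case .
      qed
    qed
    also have "\<dots> = ennreal e' * (\<integral>\<^sup>+x. ennreal (Li x) \<partial>lebesgue) + ennreal C3' * (\<integral>\<^sup>+x. ennreal (Ri x) \<partial>lebesgue)"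
      using mL mR by (simp add: nn_integral_add nn_integral_cmult)
    finally have key: "ennreal IT \<le> ennreal e' * ennreal IL + ennreal C3' * (\<integral>\<^sup>+x. ennreal (Ri x) \<partial>lebesgue)"
      unfolding eL .
    have LT': "IL \<le> C * IT" using LT unfolding IL_def IT_def .
    have fin: "ennreal IL \<le> ennreal c * (\<integral>\<^sup>+x. ennreal (Ri x) \<partial>lebesgue)"
    proof (cases "(\<integral>\<^sup>+x. ennreal (Ri x) \<partial>lebesgue)")
      case top
      then show "ennreal IL \<le> ennreal c * (\<integral>\<^sup>+x. ennreal (Ri x) \<partial>lebesgue)" using c by simp
    next
      case (real r)
      have "ennreal IT \<le> ennreal (e' * IL + C3' * r)"
        using key real IL0 e' C3' by (simp add: ennreal_mult)
      moreover have rhs0: "0 \<le> e' * IL + C3' * r" using real IL0 e' C3' by simp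
      ultimately have IT: "IT \<le> e' * IL + C3' * r" using ennreal_le_iff by blast
      have "IL \<le> C * (e' * IL + C3' * r)" using LT' IT C by (meson mult_left_mono order_trans less_imp_le)
      also have "\<dots> = IL / 2 + C * C3' * r" using C unfolding e'_def by (simp add: field_simps)
      finally have "IL \<le> c * r" unfolding c_def by simp
      then show "ennreal IL \<le> ennreal c * (\<integral>\<^sup>+x. ennreal (Ri x) \<partial>lebesgue)"
        using real c by (simp add: ennreal_mult[symmetric])
    qed
    show "(\<integral>\<^sup>+x. ennreal (g x * (\<psi> x / u x) powr (2 * \<beta> + p)) \<partial>lebesgue)
          \<le> ennreal c * (\<integral>\<^sup>+x. ennreal (w x powr ((2 * \<beta> + p) / p)
                   * norm (D\<psi> x) powr (p * ((2 * \<beta> + p) / p))) \<partial>lebesgue)"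
      using fin eL unfolding Li_def Ri_def by simp
  qed
qed


end
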